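(* Fix a partition $[n]=U\sqcup D$ and the associated map $\eta$ from $S_n$ to triangulations of the polygon $Q$ described below. Then the fibers of $\eta$ are exactly the congruence classes of a lattice congruence on the weak order on $S_n$.
   Context: $S_n$ is the set of permutations of $[n]=\{1,\dots,n\}$ in one-line notation $x=x_1\cdots x_n$. The weak order: $x\le y$ iff $I(x)\subseteq I(y)$ where $I(x)=\{(x_j,x_i): i<j,\ x_i>x_j\}$; it is a lattice. Let $Q$ be a convex polygon in $\mathbb R^2$ with vertices $v_0,v_1,\dots,v_{n+1}$ whose $x$-coordinates strictly increase with the index, with $v_0,v_{n+1}$ on the $x$-axis, such that $v_i$ has positive $y$-coordinate for $i\in U$ ("up indices") and negative $y$-coordinate for $i\in D$ ("down indices"). A diagonal is a segment joining two non-adjacent vertices; a triangulation is a maximal set of pairwise non-crossing diagonals. For $x\in S_n$ define polygonal paths $\lambda_0(x),\dots,\lambda_n(x)$ from $v_0$ to $v_{n+1}$, each visiting its vertices in increasing order of index: $\lambda_0(x)$ visits $v_0$, the $v_i$ with $i\in D$, and $v_{n+1}$; for $i\ge1$, $\lambda_i(x)$ is obtained from $\lambda_{i-1}(x)$ by deleting the vertex $v_{x_i}$ if $x_i\in D$ and by adding the vertex $v_{x_i}$ if $x_i\in U$. Then $\eta(x)$ is the triangulation of $Q$ consisting of all diagonals of $Q$ that occur as edges of some $\lambda_i(x)$. A lattice congruence is an equivalence relation compatible with meets and joins. *)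

theory Defs
  imports Main "HOL-Combinatorics.Multiset_Permutations"
begin

text \<open>Permutations of [n] in one-line notation: x = x_1 ... x_n is the list
  [x!0, ..., x!(n-1)] (so x_i = x ! (i - 1)).\<close>

definition Sn :: "nat \<Rightarrow> nat list set" where
  "Sn n = permutations_of_set {1..n}"

definition inversions :: "nat list \<Rightarrow> (nat \<times> nat) set" where
  "inversions x = {(x ! j, x ! i) | i j. i < j \<and> j < length x \<and> x ! i > x ! j}"

definition weak_le :: "nat list \<Rightarrow> nat list \<Rightarrow> bool" where
  "weak_le x y \<longleftrightarrow> inversions x \<subseteq> inversions y"

definition is_weak_meet :: "nat \<Rightarrow> nat list \<Rightarrow> nat list \<Rightarrow> nat list \<Rightarrow> bool" where
  "is_weak_meet n x y m \<longleftrightarrow> m \<in> Sn n \<and> weak_le m x \<and> weak_le m y \<and>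
     (\<forall>w\<in>Sn n. weak_le w x \<and> weak_le w y \<longrightarrow> weak_le w m)"

definition is_weak_join :: "nat \<Rightarrow> nat list \<Rightarrow> nat list \<Rightarrow> nat list \<Rightarrow> bool" where
  "is_weak_join n x y j \<longleftrightarrow> j \<in> Sn n \<and> weak_le x j \<and> weak_le y j \<and>
     (\<forall>w\<in>Sn n. weak_le x w \<and> weak_le y w \<longrightarrow> weak_le j w)"

definition weak_lattice_congruence :: "nat \<Rightarrow> (nat list \<times> nat list) set \<Rightarrow> bool" where
  "weak_lattice_congruence n R \<longleftrightarrow> equiv (Sn n) R \<and>
     (\<forall>x y z m m'. (x, y) \<in> R \<and> z \<in> Sn n \<and> is_weak_meet n x z m \<and> is_weak_meet n y z m'
        \<longrightarrow> (m, m') \<in> R) \<and>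
     (\<forall>x y z j j'. (x, y) \<in> R \<and> z \<in> Sn n \<and> is_weak_join n x z j \<and> is_weak_join n y z j'
        \<longrightarrow> (j, j') \<in> R)"

text \<open>Polygon Q with vertices v_0, ..., v_(n+1), identified with their indices.
  A monotone path from v_0 to v_(n+1) visiting its vertices in increasing index
  order is determined by its vertex set S; its edges are the pairs (a,b), a < b,
  of consecutive elements of S.\<close>
definition path_edges :: "nat set \<Rightarrow> (nat \<times> nat) set" where
  "path_edges S = {(a, b). a \<in> S \<and> b \<in> S \<and> a < b \<and> (\<forall>c\<in>S. \<not> (a < c \<and> c < b))}"

text \<open>Boundary edges of the convex polygon Q: the upper chain v_0, (v_i)_{i in U}, v_(n+1)
  and the lower chain v_0, (v_i)_{i in D}, v_(n+1).\<close>
definition Q_edges :: "nat \<Rightarrow> nat set \<Rightarrow> nat set \<Rightarrow> (nat \<times> nat) set" where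
  "Q_edges n U D = path_edges ({0, n + 1} \<union> U) \<union> path_edges ({0, n + 1} \<union> D)"

definition Q_diagonals :: "nat \<Rightarrow> nat set \<Rightarrow> nat set \<Rightarrow> (nat \<times> nat) set" where
  "Q_diagonals n U D = {(a, b). a < b \<and> b \<le> n + 1} - Q_edges n U D"

fun lam_step :: "nat set \<Rightarrow> nat set \<Rightarrow> nat \<Rightarrow> nat set" where
  "lam_step D S k = (if k \<in> D then S - {k} else S \<union> {k})"

definition lam :: "nat \<Rightarrow> nat set \<Rightarrow> nat list \<Rightarrow> nat \<Rightarrow> nat set" where
  "lam n D x i = foldl (lam_step D) ({0, n + 1} \<union> D) (take i x)"

definition eta :: "nat \<Rightarrow> nat set \<Rightarrow> nat set \<Rightarrow> nat list \<Rightarrow> (nat \<times> nat) set" where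
  "eta n U D x = {e \<in> Q_diagonals n U D. \<exists>i\<le>n. e \<in> path_edges (lam n D x i)}"

end

theory Submission
  imports Defs
begin


fun bef :: "nat list \<Rightarrow> nat \<Rightarrow> nat \<Rightarrow> bool" where
  "bef [] p q = False"
| "bef (a # xs) p q = ((a = p \<and> q \<in> set xs) \<or> bef xs p q)"

lemma bef_set: "bef xs p q \<Longrightarrow> p \<in> set xs \<and> q \<in> set xs"
  by (induction xs) auto

lemma bef_append: "bef (X @ Y) p q \<longleftrightarrow> bef X p q \<or> bef Y p q \<or> (p \<in> set X \<and> q \<in> set Y)"
  by (induction X) (auto dest: bef_set)

lemma bef_filter: "bef (filter P xs) p q \<longleftrightarrow> P p \<and> P q \<and> bef xs p q"
  by (induction xs) (auto dest: bef_set)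

lemma bef_rev: "bef (rev xs) p q \<longleftrightarrow> bef xs q p"
  by (induction xs) (auto simp: bef_append dest: bef_set)

lemma bef_idx: "bef xs p q \<longleftrightarrow> (\<exists>i j. i < j \<and> j < length xs \<and> xs ! i = p \<and> xs ! j = q)"
proof (induction xs)
  case Nil
  then show ?case by simp
next
  case (Cons a xs)
  show ?case
  proof
    assume "bef (a # xs) p q"
    then consider "a = p" "q \<in> set xs" | "bef xs p q" by auto
    then show "\<exists>i j. i < j \<and> j < length (a # xs) \<and> (a # xs) ! i = p \<and> (a # xs) ! j = q"
    proof cases
      case 1
      then obtain j where "j < length xs" "xs ! j = q" by (auto simp: in_set_conv_nth)
      then show ?thesis using 1 by (intro exI[of _ 0] exI[of _ "Suc j"]) auto
    next
      case 2
      then obtain i j where "i < j" "j < length xs" "xs ! i = p" "xs ! j = q" using Cons by auto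
      then show ?thesis by (intro exI[of _ "Suc i"] exI[of _ "Suc j"]) auto
    qed
  next
    assume "\<exists>i j. i < j \<and> j < length (a # xs) \<and> (a # xs) ! i = p \<and> (a # xs) ! j = q"
    then obtain i j where ij: "i < j" "j < length (a # xs)" "(a # xs) ! i = p" "(a # xs) ! j = q" by blast
    then obtain j' where j': "j = Suc j'" by (cases j) auto
    show "bef (a # xs) p q"
    proof (cases i)
      case 0
      then show ?thesis using ij j' by auto
    next
      case (Suc i')
      then have "bef xs p q" using Cons ij j' by auto
      then show ?thesis by simp
    qed
  qed
qed

lemma bef_nth: "distinct xs \<Longrightarrow> i < length xs \<Longrightarrow> j < length xs \<Longrightarrow> bef xs (xs ! i) (xs ! j) \<longleftrightarrow> i < j"
  by (auto simp: bef_idx nth_eq_iff_index_eq)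

lemma bef_irrefl: "distinct xs \<Longrightarrow> \<not> bef xs p p"
  by (auto simp: bef_idx nth_eq_iff_index_eq)

lemma bef_asym: "distinct xs \<Longrightarrow> bef xs p q \<Longrightarrow> \<not> bef xs q p"
  by (auto simp: bef_idx nth_eq_iff_index_eq)

lemma bef_trans: "distinct xs \<Longrightarrow> bef xs p q \<Longrightarrow> bef xs q r \<Longrightarrow> bef xs p r"
  by (auto simp: bef_idx nth_eq_iff_index_eq) (metis order_less_trans)

lemma bef_total: "distinct xs \<Longrightarrow> p \<in> set xs \<Longrightarrow> q \<in> set xs \<Longrightarrow> p \<noteq> q \<Longrightarrow> bef xs p q \<or> bef xs q p"
  by (auto simp: bef_idx in_set_conv_nth) (metis linorder_neqE_nat)

lemma inversions_bef: "inversions x = {(p, q). p < q \<and> bef x q p}"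
  unfolding inversions_def bef_idx by auto

lemma bef_swap:
  assumes "distinct (A @ u # v # B)"
  shows "bef (A @ v # u # B) p q \<longleftrightarrow> (bef (A @ u # v # B) p q \<and> \<not> (p = u \<and> q = v)) \<or> (p = v \<and> q = u)"
  using assms by (auto simp: bef_append dest: bef_set)

lemma inversions_swap:
  assumes "distinct (A @ u # v # B)" "u < v"
  shows "inversions (A @ v # u # B) = insert (u, v) (inversions (A @ u # v # B))"
  using assms unfolding inversions_bef bef_swap[OF assms(1)] by auto

lemma eq_of_bef:
  "distinct xs \<Longrightarrow> distinct ys \<Longrightarrow> set xs = set ys \<Longrightarrow> (\<And>p q. bef xs p q \<longleftrightarrow> bef ys p q) \<Longrightarrow> xs = ys"
proof (induction xs arbitrary: ys)
  case Nil
  then show ?case by simp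
next
  case (Cons a xs)
  then obtain b ys' where ys: "ys = b # ys'" by (cases ys) auto
  have ab: "a = b"
  proof (rule ccontr)
    assume "a \<noteq> b"
    then have "b \<in> set xs" using Cons.prems ys by auto
    then have "bef (a # xs) a b" by simp
    then have "bef ys' a b" using Cons.prems(4)[of a b] ys \<open>a \<noteq> b\<close> by auto
    then show False using bef_set Cons.prems(2) ys by auto
  qed
  have "xs = ys'"
  proof (rule Cons.IH)
    show "distinct xs" "distinct ys'" using Cons.prems ys by auto
    show "set xs = set ys'" using Cons.prems ys ab by (auto simp: insert_ident)
    fix p q
    show "bef xs p q \<longleftrightarrow> bef ys' p q"
      using Cons.prems ys ab bef_set[of xs p q] bef_set[of ys' p q] Cons.prems(4)[of p q]
      by (cases "p = b") auto
  qed
  then show ?case using ab ys by simp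
qed

lemma eq_of_inversions:
  assumes "distinct xs" "distinct ys" "set xs = set ys" "inversions xs = inversions ys"
  shows "xs = ys"
proof (rule eq_of_bef[OF assms(1-3)])
  fix p q
  have key: "\<And>p q. p < q \<Longrightarrow> bef xs q p \<longleftrightarrow> bef ys q p"
    using assms(4) unfolding inversions_bef by (auto simp: set_eq_iff)
  show "bef xs p q \<longleftrightarrow> bef ys p q"
  proof (cases "p = q")
    case True
    then show ?thesis using bef_irrefl assms by auto
  next
    case False
    show ?thesis
    proof (cases "q < p")
      case True
      then show ?thesis using key by auto
    next
      case False
      then have "p < q" using \<open>p \<noteq> q\<close> by auto
      have "bef xs p q \<longleftrightarrow> p \<in> set xs \<and> q \<in> set xs \<and> \<not> bef xs q p"
        using bef_total[OF assms(1), of p q] bef_asym[OF assms(1)] bef_set \<open>p \<noteq> q\<close> by blast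
      moreover have "bef ys p q \<longleftrightarrow> p \<in> set ys \<and> q \<in> set ys \<and> \<not> bef ys q p"
        using bef_total[OF assms(2), of p q] bef_asym[OF assms(2)] bef_set \<open>p \<noteq> q\<close> by blast
      ultimately show ?thesis using key[OF \<open>p < q\<close>] assms(3) by auto
    qed
  qed
qed

lemma bef_split:
  assumes "bef xs a c"
  shows "\<exists>\<alpha> \<beta> \<gamma>. xs = \<alpha> @ a # \<beta> @ c # \<gamma>"
  using assms
proof (induction xs)
  case Nil then show ?case by simp
next
  case (Cons x xs)
  show ?case
  proof (cases "x = a \<and> c \<in> set xs")
    case True
    then obtain \<beta> \<gamma> where "xs = \<beta> @ c # \<gamma>" by (meson split_list)
    then show ?thesis using True by (intro exI[of _ "[]"] exI[of _ \<beta>] exI[of _ \<gamma>]) auto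
  next
    case False
    then have "bef xs a c" using Cons by auto
    then obtain \<alpha> \<beta> \<gamma> where "xs = \<alpha> @ a # \<beta> @ c # \<gamma>" using Cons by blast
    then show ?thesis by (intro exI[of _ "x # \<alpha>"] exI[of _ \<beta>] exI[of _ \<gamma>]) auto
  qed
qed

lemma Sn_iff: "x \<in> Sn n \<longleftrightarrow> distinct x \<and> set x = {1..n}"
  unfolding Sn_def permutations_of_set_def by auto

lemma Sn_length: "x \<in> Sn n \<Longrightarrow> length x = n"
  unfolding Sn_iff using distinct_card by fastforce



context
  fixes n :: nat and U D :: "nat set"
begin

definition Sset :: "nat set \<Rightarrow> nat set" where
  "Sset R = {0, n + 1} \<union> (D - R) \<union> (U \<inter> R)"

definition mk :: "nat \<Rightarrow> nat \<Rightarrow> nat \<Rightarrow> bool" where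
  "mk lo hi s = (if lo < s \<and> s < hi then s \<in> D else s \<in> U)"

definition edge_at :: "nat set \<Rightarrow> nat \<times> nat \<Rightarrow> bool" where
  "edge_at R e \<longleftrightarrow> e \<in> path_edges (Sset R)"

definition GG :: "nat set \<Rightarrow> nat list \<Rightarrow> (nat \<times> nat) set" where
  "GG P xs = {e \<in> Q_diagonals n U D. \<exists>t \<le> length xs. edge_at (P \<union> set (take t xs)) e}"

definition wit :: "nat set \<Rightarrow> nat \<Rightarrow> nat \<Rightarrow> bool" where
  "wit R u v \<longleftrightarrow> (\<exists>s. min u v < s \<and> s < max u v \<and> s \<in> Sset R)"

definition mvs :: "nat set \<Rightarrow> nat list \<Rightarrow> nat list \<Rightarrow> bool" where
  "mvs P xs ys \<longleftrightarrow> (\<exists>A u v B. xs = A @ u # v # B \<and> ys = A @ v # u # B \<and> wit (P \<union> set A) u v)"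

definition up :: "nat list \<Rightarrow> nat list \<Rightarrow> bool" where
  "up xs ys \<longleftrightarrow> (\<exists>A u v B. xs = A @ u # v # B \<and> ys = A @ v # u # B \<and> u < v \<and> wit (set A) u v)"

end

context
  fixes n :: nat and U D :: "nat set"
  assumes UD: "U \<union> D = {1..n}" "U \<inter> D = {}"
begin

lemma D_sub: "D \<subseteq> {1..n}" and U_sub: "U \<subseteq> {1..n}"
  using UD by auto

lemma Sset_mem: "s \<in> {1..n} \<Longrightarrow> s \<in> Sset n U D R \<longleftrightarrow> (s \<in> R \<longleftrightarrow> s \<in> U)"
  unfolding Sset_def using UD by auto

lemma Sset_sub: "Sset n U D R \<subseteq> {0..n+1}"
  unfolding Sset_def using D_sub U_sub by auto

lemma Sset_insert: "s \<noteq> u \<Longrightarrow> s \<in> Sset n U D (insert u R) \<longleftrightarrow> s \<in> Sset n U D R"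
  unfolding Sset_def by auto

lemma edge_at_char:
  "edge_at n U D R (lo, hi) \<longleftrightarrow> lo < hi \<and> hi \<le> n + 1 \<and>
     (\<forall>s\<in>{1..n}. lo \<le> s \<longrightarrow> s \<le> hi \<longrightarrow> (s \<in> R \<longleftrightarrow> mk U D lo hi s))"
proof
  assume e: "edge_at n U D R (lo, hi)"
  then have lohi: "lo \<in> Sset n U D R" "hi \<in> Sset n U D R" "lo < hi" "\<forall>c\<in>Sset n U D R. \<not> (lo < c \<and> c < hi)"
    unfolding edge_at_def path_edges_def by auto
  have "hi \<le> n + 1" using lohi Sset_sub[of R] by auto
  moreover have "s \<in> R \<longleftrightarrow> mk U D lo hi s" if "s \<in> {1..n}" "lo \<le> s" "s \<le> hi" for s
  proof (cases "lo < s \<and> s < hi")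
    case True
    then have "s \<notin> Sset n U D R" using lohi by auto
    then show ?thesis using True that Sset_mem[of s R] UD unfolding mk_def by auto
  next
    case False
    then have "s = lo \<or> s = hi" using that by auto
    then have "s \<in> Sset n U D R" using lohi by auto
    then show ?thesis using False that Sset_mem[of s R] UD unfolding mk_def by auto
  qed
  ultimately show "lo < hi \<and> hi \<le> n + 1 \<and> (\<forall>s\<in>{1..n}. lo \<le> s \<longrightarrow> s \<le> hi \<longrightarrow> (s \<in> R \<longleftrightarrow> mk U D lo hi s))"
    using lohi by auto
next
  assume h: "lo < hi \<and> hi \<le> n + 1 \<and> (\<forall>s\<in>{1..n}. lo \<le> s \<longrightarrow> s \<le> hi \<longrightarrow> (s \<in> R \<longleftrightarrow> mk U D lo hi s))"
  have "lo \<in> Sset n U D R"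
  proof (cases "lo = 0")
    case True then show ?thesis unfolding Sset_def by auto
  next
    case False
    then have "lo \<in> {1..n}" using h by auto
    then show ?thesis using h Sset_mem[of lo R] unfolding mk_def by auto
  qed
  moreover have "hi \<in> Sset n U D R"
  proof (cases "hi = n + 1")
    case True then show ?thesis unfolding Sset_def by auto
  next
    case False
    then have "hi \<in> {1..n}" using h by auto
    then show ?thesis using h Sset_mem[of hi R] unfolding mk_def by auto
  qed
  moreover have "\<not> (lo < c \<and> c < hi)" if "c \<in> Sset n U D R" for c
  proof
    assume c: "lo < c \<and> c < hi"
    then have "c \<in> {1..n}" using h by auto
    then show False using h c that Sset_mem[of c R] UD unfolding mk_def by auto
  qed
  ultimately show "edge_at n U D R (lo, hi)"
    unfolding edge_at_def path_edges_def using h by auto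
qed

lemma edge_agree:
  assumes "\<forall>s\<in>{1..n}. lo \<le> s \<longrightarrow> s \<le> hi \<longrightarrow> (s \<in> R1 \<longleftrightarrow> s \<in> R2)"
  shows "edge_at n U D R1 (lo, hi) = edge_at n U D R2 (lo, hi)"
  using assms unfolding edge_at_char by auto

lemma Q_edges_char: "Q_edges n U D = {e. edge_at n U D {} e} \<union> {e. edge_at n U D {1..n} e}"
proof -
  have "Sset n U D {} = {0, n + 1} \<union> D" unfolding Sset_def by auto
  moreover have "Sset n U D {1..n} = {0, n + 1} \<union> U" unfolding Sset_def using UD by auto
  ultimately show ?thesis unfolding Q_edges_def edge_at_def by auto
qed

lemma wit_sym: "wit n U D R u v \<longleftrightarrow> wit n U D R v u"
  unfolding wit_def by (auto simp: min.commute max.commute)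

lemma mvs_sym: "mvs n U D P xs ys \<Longrightarrow> mvs n U D P ys xs"
  unfolding mvs_def using wit_sym by blast

lemma middle_step:
  assumes e: "edge_at n U D (insert u R0) (lo, hi)" and w: "wit n U D R0 u v"
    and uv: "u \<in> {1..n}" "v \<in> {1..n}"
  shows "edge_at n U D R0 (lo, hi) \<or> edge_at n U D (insert v (insert u R0)) (lo, hi)"
proof (cases "lo \<le> v \<and> v \<le> hi")
  case False
  then have "edge_at n U D (insert v (insert u R0)) (lo, hi)"
    using e edge_agree[of lo hi "insert v (insert u R0)" "insert u R0"] by auto
  then show ?thesis by simp
next
  case vin: True
  show ?thesis
  proof (cases "lo \<le> u \<and> u \<le> hi")
    case False
    then have "edge_at n U D R0 (lo, hi)"
      using e edge_agree[of lo hi "insert u R0" R0] by auto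
    then show ?thesis by simp
  next
    case uin: True
    obtain s where s: "min u v < s" "s < max u v" "s \<in> Sset n U D R0" using w unfolding wit_def by auto
    have s1: "s \<in> {1..n}" using s uv by auto
    have s2: "lo < s \<and> s < hi" using s vin uin by auto
    have "s \<in> insert u R0 \<longleftrightarrow> mk U D lo hi s" using e s1 s2 unfolding edge_at_char by auto
    then have "s \<in> R0 \<longleftrightarrow> s \<in> D" using s2 s unfolding mk_def by auto
    moreover have "s \<in> R0 \<longleftrightarrow> s \<in> U" using Sset_mem[OF s1] s by auto
    ultimately show ?thesis using UD s1 by auto
  qed
qed

lemma GG_mvs_sub:
  assumes m: "mvs n U D P xs ys" and sub: "set xs \<subseteq> {1..n}"
  shows "GG n U D P xs \<subseteq> GG n U D P ys"
proof
  obtain A u v B where xs: "xs = A @ u # v # B" and ys: "ys = A @ v # u # B"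
    and w: "wit n U D (P \<union> set A) u v" using m unfolding mvs_def by blast
  have uv: "u \<in> {1..n}" "v \<in> {1..n}" using sub xs by auto
  fix e assume "e \<in> GG n U D P xs"
  then obtain t where e: "e \<in> Q_diagonals n U D" "t \<le> length xs" "edge_at n U D (P \<union> set (take t xs)) e"
    unfolding GG_def by auto
  obtain lo hi where e_eq: "e = (lo, hi)" by (cases e)
  have len: "length xs = length ys" using xs ys by simp
  consider "t \<le> length A" | "t = Suc (length A)" | "t \<ge> Suc (Suc (length A))" by linarith
  then show "e \<in> GG n U D P ys"
  proof cases
    case 1
    then have "take t xs = take t ys" using xs ys by simp
    then show ?thesis using e len unfolding GG_def by auto
  next
    case 3
    then have "set (take t xs) = set (take t ys)" using xs ys
      by (auto simp: take_Cons' split: if_splits)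
    then show ?thesis using e len unfolding GG_def by auto
  next
    case 2
    then have "take t xs = A @ [u]" using xs by simp
    then have "edge_at n U D (insert u (P \<union> set A)) (lo, hi)" using e e_eq by simp
    from middle_step[OF this w uv]
    show ?thesis
    proof
      assume "edge_at n U D (P \<union> set A) (lo, hi)"
      moreover have "take (length A) ys = A" using ys by simp
      moreover have "length A \<le> length ys" using ys by simp
      ultimately show ?thesis using e e_eq len unfolding GG_def
        by (auto intro!: exI[of _ "length A"])
    next
      assume h: "edge_at n U D (insert v (insert u (P \<union> set A))) (lo, hi)"
      have "take (Suc (Suc (length A))) ys = A @ [v, u]" using ys by simp
      moreover have "insert v (insert u (P \<union> set A)) = P \<union> set (A @ [v, u])" by auto
      moreover have "Suc (Suc (length A)) \<le> length ys" using ys by simp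
      ultimately show ?thesis using e e_eq h unfolding GG_def
        by (auto intro!: exI[of _ "Suc (Suc (length A))"])
    qed
  qed
qed

lemma GG_mvs:
  assumes "mvs n U D P xs ys" "set xs \<subseteq> {1..n}"
  shows "GG n U D P xs = GG n U D P ys"
proof -
  obtain A u v B where "xs = A @ u # v # B" "ys = A @ v # u # B"
    using assms unfolding mvs_def by blast
  then have "set ys = set xs" by auto
  then show ?thesis using GG_mvs_sub[OF assms] GG_mvs_sub[OF mvs_sym[OF assms(1)]] assms(2) by auto
qed

lemma mvs_set: "mvs n U D P xs ys \<Longrightarrow> set ys = set xs \<and> (distinct ys \<longleftrightarrow> distinct xs)"
  unfolding mvs_def by auto

lemma GG_mvs_star:
  assumes "(mvs n U D P)\<^sup>*\<^sup>* xs ys" "set xs \<subseteq> {1..n}"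
  shows "GG n U D P xs = GG n U D P ys"
  using assms
proof (induction rule: rtranclp_induct)
  case base then show ?case by simp
next
  case (step y z)
  have "set y = set xs" using step.hyps(1)
    by (induction rule: rtranclp_induct) (auto dest: mvs_set)
  then show ?case using step GG_mvs by auto
qed

end



context
  fixes n :: nat and U D :: "nat set"
  assumes UD: "U \<union> D = {1..n}" "U \<inter> D = {}"
begin

lemma GG_decomp:
  assumes kP: "k \<notin> P"
  shows "GG n U D (insert k P) xs = GG n U D P (k # xs) - {e. edge_at n U D P e \<and> \<not> edge_at n U D (insert k P) e}"
proof
  show "GG n U D (insert k P) xs \<subseteq> GG n U D P (k # xs) - {e. edge_at n U D P e \<and> \<not> edge_at n U D (insert k P) e}"
  proof
    fix e assume "e \<in> GG n U D (insert k P) xs"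
    then obtain t where e: "e \<in> Q_diagonals n U D" "t \<le> length xs" "edge_at n U D (insert k P \<union> set (take t xs)) e"
      unfolding GG_def by auto
    obtain lo hi where e_eq: "e = (lo, hi)" by (cases e)
    have "e \<in> GG n U D P (k # xs)" using e unfolding GG_def
      by (auto intro!: exI[of _ "Suc t"])
    moreover have "\<not> (edge_at n U D P e \<and> \<not> edge_at n U D (insert k P) e)"
    proof
      assume h: "edge_at n U D P e \<and> \<not> edge_at n U D (insert k P) e"
      have kin: "k \<in> {1..n} \<and> lo \<le> k \<and> k \<le> hi"
      proof (rule ccontr)
        assume "\<not> (k \<in> {1..n} \<and> lo \<le> k \<and> k \<le> hi)"
        then have "edge_at n U D P (lo, hi) = edge_at n U D (insert k P) (lo, hi)"
          using edge_agree[OF UD, of lo hi P "insert k P"] by auto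
        then show False using h e_eq by simp
      qed
      have "k \<in> P \<longleftrightarrow> mk U D lo hi k" using h e_eq kin edge_at_char[OF UD, of P lo hi] by auto
      moreover have "k \<in> insert k P \<union> set (take t xs) \<longleftrightarrow> mk U D lo hi k"
        using e e_eq kin edge_at_char[OF UD, of "insert k P \<union> set (take t xs)" lo hi] by auto
      ultimately show False using kP by auto
    qed
    ultimately show "e \<in> GG n U D P (k # xs) - {e. edge_at n U D P e \<and> \<not> edge_at n U D (insert k P) e}"
      by auto
  qed
next
  show "GG n U D P (k # xs) - {e. edge_at n U D P e \<and> \<not> edge_at n U D (insert k P) e} \<subseteq> GG n U D (insert k P) xs"
  proof
    fix e assume h: "e \<in> GG n U D P (k # xs) - {e. edge_at n U D P e \<and> \<not> edge_at n U D (insert k P) e}"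
    then obtain t where e: "e \<in> Q_diagonals n U D" "t \<le> Suc (length xs)" "edge_at n U D (P \<union> set (take t (k # xs))) e"
      unfolding GG_def by auto
    show "e \<in> GG n U D (insert k P) xs"
    proof (cases t)
      case 0
      then have "edge_at n U D (insert k P) e" using h e by auto
      then show ?thesis using e unfolding GG_def by (auto intro!: exI[of _ 0])
    next
      case (Suc t')
      then show ?thesis using e unfolding GG_def by (auto intro!: exI[of _ t'])
    qed
  qed
qed

lemma front:
  assumes "\<And>A u B. ys1 = A @ u # B \<Longrightarrow> wit n U D (P \<union> set A) u k"
  shows "(mvs n U D P)\<^sup>*\<^sup>* (ys1 @ k # ys2) (k # ys1 @ ys2)"
  using assms
proof (induction ys1 arbitrary: ys2 rule: rev_induct)
  case Nil
  then show ?case by simp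
next
  case (snoc u ys1')
  have w: "wit n U D (P \<union> set ys1') u k" using snoc.prems[of ys1' u "[]"] by simp
  have "mvs n U D P (ys1' @ u # k # ys2) (ys1' @ k # u # ys2)"
    unfolding mvs_def using w by blast
  moreover have "(mvs n U D P)\<^sup>*\<^sup>* (ys1' @ k # u # ys2) (k # ys1' @ u # ys2)"
    using snoc.IH[of "u # ys2"] snoc.prems by fastforce
  ultimately show ?case by simp
qed

lemma mvs_star_sym: "(mvs n U D P)\<^sup>*\<^sup>* xs ys \<Longrightarrow> (mvs n U D P)\<^sup>*\<^sup>* ys xs"
proof (induction rule: rtranclp_induct)
  case base then show ?case by simp
next
  case (step y z)
  then show ?case using mvs_sym[OF UD, of P y z]
    by (meson converse_rtranclp_into_rtranclp)
qed

lemma mvs_lift: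
  assumes "(mvs n U D (insert k P))\<^sup>*\<^sup>* xs ys"
  shows "(mvs n U D P)\<^sup>*\<^sup>* (k # xs) (k # ys)"
  using assms
proof (induction rule: rtranclp_induct)
  case base then show ?case by simp
next
  case (step y z)
  then obtain A u v B where "y = A @ u # v # B" "z = A @ v # u # B" "wit n U D (insert k P \<union> set A) u v"
    unfolding mvs_def by blast
  then have "mvs n U D P (k # y) (k # z)" unfolding mvs_def
    by (intro exI[of _ "k # A"] exI[of _ u] exI[of _ v] exI[of _ B]) auto
  then show ?case using step by simp
qed

lemma no_wit_contra:
  assumes ys: "ys = A @ u # B @ k # ys2" and dys: "distinct ys" and sub: "set ys \<subseteq> {1..n}"
    and Pd: "P \<inter> set ys = {}" and xs: "set (k # xs') = set ys"
    and GGeq: "GG n U D P (k # xs') = GG n U D P ys"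
    and nw: "\<not> wit n U D (P \<union> set A) u k"
  shows False
proof -
  define R where "R = insert u (P \<union> set A)"
  define lo where "lo = Max {s \<in> Sset n U D R. s \<le> min u k}"
  define hi where "hi = Min {s \<in> Sset n U D R. max u k \<le> s}"
  have uk: "u \<in> {1..n}" "k \<in> {1..n}" "u \<noteq> k" using ys sub dys by auto
  have fin: "finite (Sset n U D R)" using Sset_sub[OF UD, of R] finite_subset by blast
  have z: "0 \<in> Sset n U D R" "n + 1 \<in> Sset n U D R" unfolding Sset_def by auto
  have lo0: "lo \<in> {s \<in> Sset n U D R. s \<le> min u k}"
    unfolding lo_def using fin z by (intro Max_in) auto
  then have lo1: "lo \<in> Sset n U D R" "lo \<le> min u k" by auto
  have lo2: "\<And>s. s \<in> Sset n U D R \<Longrightarrow> s \<le> min u k \<Longrightarrow> s \<le> lo"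
    unfolding lo_def by (rule Max_ge) (use fin in auto)
  have hi0: "hi \<in> {s \<in> Sset n U D R. max u k \<le> s}"
    unfolding hi_def using fin z uk by (intro Min_in) (auto intro!: exI[of _ "n + 1"])
  then have hi1: "hi \<in> Sset n U D R" "max u k \<le> hi" by auto
  have hi2: "\<And>s. s \<in> Sset n U D R \<Longrightarrow> max u k \<le> s \<Longrightarrow> hi \<le> s"
    unfolding hi_def by (rule Min_le) (use fin in auto)
  have between: "\<And>c. min u k < c \<Longrightarrow> c < max u k \<Longrightarrow> c \<notin> Sset n U D R"
  proof -
    fix c assume c: "min u k < c" "c < max u k"
    then have "c \<noteq> u" by auto
    then have "c \<in> Sset n U D R \<longleftrightarrow> c \<in> Sset n U D (P \<union> set A)"
      unfolding R_def by (rule Sset_insert[OF UD])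
    then show "c \<notin> Sset n U D R" using nw c unfolding wit_def by auto
  qed
  have edge: "edge_at n U D R (lo, hi)"
    unfolding edge_at_def path_edges_def
  proof (clarsimp simp: lo1 hi1, intro conjI)
    show "lo < hi" using lo1 hi1 uk by auto
    show "\<forall>c\<in>Sset n U D R. lo < c \<longrightarrow> \<not> c < hi"
    proof (intro ballI impI notI)
      fix c assume c: "c \<in> Sset n U D R" "lo < c" "c < hi"
      consider "c \<le> min u k" | "min u k < c \<and> c < max u k" | "max u k \<le> c" by linarith
      then show False
      proof cases
        case 1 then show False using lo2[OF c(1)] c by auto
      next
        case 2 then show False using between c by auto
      next
        case 3 then show False using hi2[OF c(1)] c by auto
      qed
    qed
  qed
  have ch: "lo < hi \<and> hi \<le> n + 1 \<and> (\<forall>s\<in>{1..n}. lo \<le> s \<longrightarrow> s \<le> hi \<longrightarrow> (s \<in> R \<longleftrightarrow> mk U D lo hi s))"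
    using edge edge_at_char[OF UD] by blast
  have mku: "mk U D lo hi u" using ch uk lo1 hi1 unfolding R_def by auto
  have kR: "k \<notin> R" using ys dys Pd uk unfolding R_def by auto
  have mkk: "\<not> mk U D lo hi k" using ch uk lo1 hi1 kR by auto
  have notQ: "(lo, hi) \<notin> Q_edges n U D"
  proof
    assume "(lo, hi) \<in> Q_edges n U D"
    then have "edge_at n U D {} (lo, hi) \<or> edge_at n U D {1..n} (lo, hi)"
      using Q_edges_char[OF UD] by auto
    then show False
    proof
      assume "edge_at n U D {} (lo, hi)"
      then show False using edge_at_char[OF UD, of "{}" lo hi] mku uk lo1 hi1 by auto
    next
      assume "edge_at n U D {1..n} (lo, hi)"
      then show False using edge_at_char[OF UD, of "{1..n}" lo hi] mkk uk lo1 hi1 by auto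
    qed
  qed
  have Qd: "(lo, hi) \<in> Q_diagonals n U D"
  proof -
    have "lo < hi" "hi \<le> n + 1" using ch by auto
    then show ?thesis unfolding Q_diagonals_def using notQ by simp
  qed
  have eqR: "P \<union> set (take (Suc (length A)) ys) = R" using ys unfolding R_def by auto
  have e1: "edge_at n U D (P \<union> set (take (Suc (length A)) ys)) (lo, hi)" using edge eqR by simp
  have len1: "Suc (length A) \<le> length ys" using ys by simp
  have "(lo, hi) \<in> GG n U D P ys" unfolding GG_def using Qd e1 len1 by blast
  then have "(lo, hi) \<in> GG n U D P (k # xs')" using GGeq by simp
  then have "\<exists>t. edge_at n U D (P \<union> set (take t (k # xs'))) (lo, hi)"
    unfolding GG_def by auto
  then obtain t where t: "edge_at n U D (P \<union> set (take t (k # xs'))) (lo, hi)"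
    by blast
  have tc0: "lo < hi \<and> hi \<le> n + 1 \<and> (\<forall>s\<in>{1..n}. lo \<le> s \<longrightarrow> s \<le> hi \<longrightarrow> (s \<in> P \<union> set (take t (k # xs')) \<longleftrightarrow> mk U D lo hi s))"
    using edge_at_char[OF UD, THEN iffD1, OF t] .
  have tc: "\<forall>s\<in>{1..n}. lo \<le> s \<longrightarrow> s \<le> hi \<longrightarrow> (s \<in> P \<union> set (take t (k # xs')) \<longleftrightarrow> mk U D lo hi s)"
    using conjunct2[OF conjunct2[OF tc0]] .
  have bnds: "lo \<le> u" "u \<le> hi" "lo \<le> k" "k \<le> hi" using lo1(2) hi1(2) by auto
  have hu: "u \<in> P \<union> set (take t (k # xs')) \<longleftrightarrow> mk U D lo hi u"
    using tc uk(1) bnds(1,2) by blast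
  have hk: "k \<in> P \<union> set (take t (k # xs')) \<longleftrightarrow> mk U D lo hi k"
    using tc uk(2) bnds(3,4) by blast
  show False
  proof (cases t)
    case 0
    have "u \<notin> P" using Pd ys by auto
    then show False using hu mku 0 by simp
  next
    case (Suc t')
    then show False using hk mkk by simp
  qed
qed

lemma B_main:
  "distinct xs \<Longrightarrow> distinct ys \<Longrightarrow> set xs = set ys \<Longrightarrow> set xs \<subseteq> {1..n} \<Longrightarrow> P \<inter> set xs = {}
   \<Longrightarrow> GG n U D P xs = GG n U D P ys \<Longrightarrow> (mvs n U D P)\<^sup>*\<^sup>* xs ys"
proof (induction xs arbitrary: P ys)
  case Nil
  then show ?case by simp
next
  case (Cons k xs')
  have "k \<in> set ys" using Cons.prems by auto
  then obtain ys1 ys2 where ys: "ys = ys1 @ k # ys2" by (meson split_list)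
  have w: "wit n U D (P \<union> set A) u k" if "ys1 = A @ u # B" for A u B
  proof (rule ccontr)
    assume "\<not> wit n U D (P \<union> set A) u k"
    moreover have "ys = A @ u # B @ k # ys2" using ys that by simp
    moreover have "set ys \<subseteq> {1..n}" "P \<inter> set ys = {}" "set (k # xs') = set ys"
      using Cons.prems(3,4,5) by auto
    ultimately show False
      using no_wit_contra[of ys A u B k ys2 P xs'] Cons.prems(2,6) by blast
  qed
  define ys' where "ys' = ys1 @ ys2"
  have fr: "(mvs n U D P)\<^sup>*\<^sup>* ys (k # ys')" using front[of ys1 P k ys2] w ys unfolding ys'_def by blast
  have "GG n U D P ys = GG n U D P (k # ys')"
    using GG_mvs_star[OF UD fr] Cons.prems by auto
  then have eq1: "GG n U D P (k # xs') = GG n U D P (k # ys')" using Cons.prems by simp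
  have kP: "k \<notin> P" using Cons.prems by auto
  have eq2: "GG n U D (insert k P) xs' = GG n U D (insert k P) ys'"
    using GG_decomp[OF kP, of xs'] GG_decomp[OF kP, of ys'] eq1 by simp
  have dys: "distinct ys'" "k \<notin> set ys'" using Cons.prems ys unfolding ys'_def by auto
  have sets: "set xs' = set ys'"
  proof -
    have "insert k (set xs') = insert k (set ys')" using Cons.prems ys unfolding ys'_def by auto
    then show ?thesis using dys Cons.prems by (auto simp: insert_ident)
  qed
  have "(mvs n U D (insert k P))\<^sup>*\<^sup>* xs' ys'"
  proof (rule Cons.IH)
    show "distinct xs'" using Cons.prems(1) by simp
    show "distinct ys'" using dys by simp
    show "set xs' = set ys'" using sets .
    show "set xs' \<subseteq> {1..n}" using Cons.prems(4) by simp
    show "insert k P \<inter> set xs' = {}" using Cons.prems(1,5) by auto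
    show "GG n U D (insert k P) xs' = GG n U D (insert k P) ys'" using eq2 .
  qed
  then have "(mvs n U D P)\<^sup>*\<^sup>* (k # xs') (k # ys')" by (rule mvs_lift)
  moreover have "(mvs n U D P)\<^sup>*\<^sup>* (k # ys') ys" using mvs_star_sym[OF fr] .
  ultimately show ?case by simp
qed

lemma foldl_lam:
  "set ws \<subseteq> {1..n} \<Longrightarrow> foldl (lam_step D) (Sset n U D R) ws = Sset n U D (R \<union> set ws)"
proof (induction ws arbitrary: R)
  case Nil then show ?case by simp
next
  case (Cons k ws)
  have "lam_step D (Sset n U D R) k = Sset n U D (insert k R)"
    using Cons.prems UD unfolding Sset_def by auto
  then show ?case using Cons by simp
qed

lemma eta_GG:
  assumes "x \<in> Sn n"
  shows "eta n U D x = GG n U D {} x"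
proof -
  have sx: "set x = {1..n}" "length x = n" using assms Sn_iff Sn_length by auto
  have "lam n D x i = Sset n U D (set (take i x))" for i
  proof -
    have "{0, n + 1} \<union> D = Sset n U D {}" unfolding Sset_def by auto
    moreover have "set (take i x) \<subseteq> {1..n}" using sx set_take_subset by metis
    ultimately show ?thesis unfolding lam_def using foldl_lam[of "take i x" "{}"] by simp
  qed
  then show ?thesis unfolding eta_def GG_def edge_at_def using sx by auto
qed

lemma eta_iff_mvs:
  assumes "x \<in> Sn n" "y \<in> Sn n"
  shows "eta n U D x = eta n U D y \<longleftrightarrow> (mvs n U D {})\<^sup>*\<^sup>* x y"
proof
  assume "eta n U D x = eta n U D y"
  then show "(mvs n U D {})\<^sup>*\<^sup>* x y" using B_main[of x y "{}"] assms eta_GG Sn_iff by auto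
next
  assume "(mvs n U D {})\<^sup>*\<^sup>* x y"
  then show "eta n U D x = eta n U D y" using GG_mvs_star[OF UD] assms eta_GG Sn_iff by auto
qed

end



lemma newman_measure:
  fixes r :: "'a \<Rightarrow> 'a \<Rightarrow> bool" and f :: "'a \<Rightarrow> nat"
  assumes pres: "\<And>x y. r x y \<Longrightarrow> x \<in> S \<longleftrightarrow> y \<in> S"
    and dec: "\<And>x y. x \<in> S \<Longrightarrow> r x y \<Longrightarrow> f y < f x"
    and lc: "\<And>a b c. a \<in> S \<Longrightarrow> r a b \<Longrightarrow> r a c \<Longrightarrow> \<exists>d. r\<^sup>*\<^sup>* b d \<and> r\<^sup>*\<^sup>* c d"
  shows "a \<in> S \<Longrightarrow> r\<^sup>*\<^sup>* a b \<Longrightarrow> r\<^sup>*\<^sup>* a c \<Longrightarrow> \<exists>d. r\<^sup>*\<^sup>* b d \<and> r\<^sup>*\<^sup>* c d"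
proof (induction "f a" arbitrary: a b c rule: less_induct)
  case less
  have presS: "\<And>x y. r\<^sup>*\<^sup>* x y \<Longrightarrow> x \<in> S \<Longrightarrow> y \<in> S"
  proof -
    fix x y assume "r\<^sup>*\<^sup>* x y" "x \<in> S"
    then show "y \<in> S" by (induction rule: rtranclp_induct) (use pres in blast)+
  qed
  show ?case
  proof (cases "a = b")
    case True
    then show ?thesis using less.prems by blast
  next
    case False
    then obtain b1 where ab1: "r a b1" and b1b: "r\<^sup>*\<^sup>* b1 b"
      using less.prems(2) by (metis converse_rtranclpE)
    show ?thesis
    proof (cases "a = c")
      case True
      then show ?thesis using less.prems by blast
    next
      case False
      then obtain c1 where ac1: "r a c1" and c1c: "r\<^sup>*\<^sup>* c1 c"
        using less.prems(3) by (metis converse_rtranclpE)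
      obtain d where b1d: "r\<^sup>*\<^sup>* b1 d" and c1d: "r\<^sup>*\<^sup>* c1 d" using lc[OF less.prems(1) ab1 ac1] by blast
      have b1S: "b1 \<in> S" and c1S: "c1 \<in> S" using pres ab1 ac1 less.prems(1) by blast+
      obtain e where be: "r\<^sup>*\<^sup>* b e" and de: "r\<^sup>*\<^sup>* d e"
        using less.hyps[OF dec[OF less.prems(1) ab1] b1S b1b b1d] by blast
      have c1e: "r\<^sup>*\<^sup>* c1 e" using c1d de by simp
      obtain g where cg: "r\<^sup>*\<^sup>* c g" and eg: "r\<^sup>*\<^sup>* e g"
        using less.hyps[OF dec[OF less.prems(1) ac1] c1S c1c c1e] by blast
      have "r\<^sup>*\<^sup>* b g" using be eg by simp
      then show ?thesis using cg by blast
    qed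
  qed
qed

lemma church_rosser_measure:
  fixes r :: "'a \<Rightarrow> 'a \<Rightarrow> bool" and f :: "'a \<Rightarrow> nat"
  assumes pres: "\<And>x y. r x y \<Longrightarrow> x \<in> S \<longleftrightarrow> y \<in> S"
    and dec: "\<And>x y. x \<in> S \<Longrightarrow> r x y \<Longrightarrow> f y < f x"
    and lc: "\<And>a b c. a \<in> S \<Longrightarrow> r a b \<Longrightarrow> r a c \<Longrightarrow> \<exists>d. r\<^sup>*\<^sup>* b d \<and> r\<^sup>*\<^sup>* c d"
    and aS: "a \<in> S"
  shows "(\<lambda>x y. r x y \<or> r y x)\<^sup>*\<^sup>* a b \<Longrightarrow> \<exists>d. r\<^sup>*\<^sup>* a d \<and> r\<^sup>*\<^sup>* b d"
proof (induction rule: rtranclp_induct)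
  case base
  then show ?case by blast
next
  case (step b c)
  have presS: "\<And>x y. (\<lambda>x y. r x y \<or> r y x)\<^sup>*\<^sup>* x y \<Longrightarrow> x \<in> S \<Longrightarrow> y \<in> S"
  proof -
    fix x y assume "(\<lambda>x y. r x y \<or> r y x)\<^sup>*\<^sup>* x y" "x \<in> S"
    then show "y \<in> S" by (induction rule: rtranclp_induct) (use pres in blast)+
  qed
  have bS: "b \<in> S" using presS[OF step.hyps(1) aS] .
  obtain d where ad: "r\<^sup>*\<^sup>* a d" and bd: "r\<^sup>*\<^sup>* b d" using step.IH by blast
  from step.hyps(2) show ?case
  proof
    assume bc: "r b c"
    have bc': "r\<^sup>*\<^sup>* b c" using bc by simp
    have "\<exists>e. r\<^sup>*\<^sup>* d e \<and> r\<^sup>*\<^sup>* c e"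
    proof (rule newman_measure[where r=r and S=S and f=f and a=b])
      show "\<And>x y. r x y \<Longrightarrow> (x \<in> S) = (y \<in> S)" by (rule pres)
      show "\<And>x y. x \<in> S \<Longrightarrow> r x y \<Longrightarrow> f y < f x" by (rule dec)
      show "\<And>a b c. a \<in> S \<Longrightarrow> r a b \<Longrightarrow> r a c \<Longrightarrow> \<exists>d. r\<^sup>*\<^sup>* b d \<and> r\<^sup>*\<^sup>* c d" by (rule lc)
    qed (use bS bd bc' in auto)
    then obtain e where de: "r\<^sup>*\<^sup>* d e" and ce: "r\<^sup>*\<^sup>* c e" by blast
    then show ?thesis using ad by (meson rtranclp_trans)
  next
    assume "r c b"
    then show ?thesis using ad bd by (meson converse_rtranclp_into_rtranclp)
  qed
qed

lemma two_decomp: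
  "A1 @ u1 # v1 # B1 = A2 @ u2 # v2 # B2 \<Longrightarrow> length A1 < length A2 \<Longrightarrow>
   (A2 = A1 @ [u1] \<and> u2 = v1 \<and> B1 = v2 # B2) \<or> (\<exists>C. A2 = A1 @ u1 # v1 # C \<and> B1 = C @ u2 # v2 # B2)"
proof (induction A1 arbitrary: A2)
  case Nil
  then obtain a A2' where A2: "A2 = a # A2'" by (cases A2) auto
  show ?case
  proof (cases A2')
    case Nil
    then show ?thesis using Nil.prems A2 by auto
  next
    case (Cons b C)
    then show ?thesis using Nil.prems A2 by auto
  qed
next
  case (Cons a A1')
  then obtain a' A2' where A2: "A2 = a' # A2'" by (cases A2) auto
  then show ?case using Cons.IH[of A2'] Cons.prems by auto
qed

context
  fixes n :: nat and U D :: "nat set"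
  assumes UD: "U \<union> D = {1..n}" "U \<inter> D = {}"
begin

lemma up_intro:
  assumes "u < s" "s < v" "s \<in> Sset n U D (set A)"
  shows "up n U D (A @ u # v # B) (A @ v # u # B)"
  unfolding up_def wit_def using assms by (intro exI[of _ A] exI[of _ u] exI[of _ v] exI[of _ B]) auto

lemma up_intro_wit:
  assumes "u < v" "wit n U D (set A) u v"
  shows "up n U D (A @ u # v # B) (A @ v # u # B)"
  unfolding up_def using assms by blast

lemma up_lc_aux:
  assumes x1: "x = A1 @ u1 # v1 # B1" and y1: "y1 = A1 @ v1 # u1 # B1" and uv1: "u1 < v1"
    and w1: "wit n U D (set A1) u1 v1"
    and x2: "x = A2 @ u2 # v2 # B2" and y2: "y2 = A2 @ v2 # u2 # B2" and uv2: "u2 < v2"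
    and w2: "wit n U D (set A2) u2 v2"
    and len: "length A1 < length A2"
  shows "\<exists>d. (up n U D)\<^sup>*\<^sup>* y1 d \<and> (up n U D)\<^sup>*\<^sup>* y2 d"
proof -
  from two_decomp[of A1 u1 v1 B1 A2 u2 v2 B2] x1 x2 len
  consider "A2 = A1 @ [u1]" "u2 = v1" "B1 = v2 # B2" | C where "A2 = A1 @ u1 # v1 # C" "B1 = C @ u2 # v2 # B2"
    by auto
  then show ?thesis
  proof cases
    case 1
    obtain s1 where s1: "u1 < s1" "s1 < v1" "s1 \<in> Sset n U D (set A1)"
      using w1 uv1 unfolding wit_def by auto
    have w2': "wit n U D (insert u1 (set A1)) v1 v2" using w2 1 by simp
    obtain s2 where s2: "v1 < s2" "s2 < v2" "s2 \<in> Sset n U D (insert u1 (set A1))"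
      using w2' uv2 1 unfolding wit_def by auto
    have s2': "s2 \<in> Sset n U D (set A1)" using s2 Sset_insert[OF UD, of s2 u1 "set A1"] s1 by auto
    have s1b: "s1 \<in> Sset n U D (set (A1 @ [v1]))" using s1 Sset_insert[OF UD, of s1 v1 "set A1"] by simp
    have s1c: "s1 \<in> Sset n U D (set (A1 @ [v2]))" using s1 s2 Sset_insert[OF UD, of s1 v2 "set A1"] by simp
    have y1e: "y1 = A1 @ v1 # u1 # v2 # B2" and y2e: "y2 = A1 @ u1 # v2 # v1 # B2"
      using y1 y2 1 by auto
    have s1v2: "s1 < v2" using s1 s2 by linarith
    have st1: "up n U D (A1 @ v1 # u1 # v2 # B2) (A1 @ v1 # v2 # u1 # B2)"
      using up_intro[of u1 s1 v2 "A1 @ [v1]" B2] s1 s1v2 s1b by simp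
    have st2: "up n U D (A1 @ v1 # v2 # u1 # B2) (A1 @ v2 # v1 # u1 # B2)"
      using up_intro[of v1 s2 v2 A1 "u1 # B2"] s2 s2' by simp
    have st3: "up n U D (A1 @ u1 # v2 # v1 # B2) (A1 @ v2 # u1 # v1 # B2)"
      using up_intro[of u1 s1 v2 A1 "v1 # B2"] s1 s1v2 by simp
    have st4: "up n U D (A1 @ v2 # u1 # v1 # B2) (A1 @ v2 # v1 # u1 # B2)"
      using up_intro[of u1 s1 v1 "A1 @ [v2]" B2] s1 s1c by simp
    have "(up n U D)\<^sup>*\<^sup>* y1 (A1 @ v2 # v1 # u1 # B2)" using st1 st2 y1e by simp
    moreover have "(up n U D)\<^sup>*\<^sup>* y2 (A1 @ v2 # v1 # u1 # B2)" using st3 st4 y2e by simp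
    ultimately show ?thesis by blast
  next
    case (2 C)
    have sA: "set (A1 @ v1 # u1 # C) = set A2" using 2 by auto
    have d1: "up n U D ((A1 @ v1 # u1 # C) @ u2 # v2 # B2) ((A1 @ v1 # u1 # C) @ v2 # u2 # B2)"
      using up_intro_wit[of u2 v2 "A1 @ v1 # u1 # C" B2] uv2 w2 sA by simp
    have d2: "up n U D (A1 @ u1 # v1 # C @ v2 # u2 # B2) (A1 @ v1 # u1 # C @ v2 # u2 # B2)"
      using up_intro_wit[of u1 v1 A1 "C @ v2 # u2 # B2"] uv1 w1 by simp
    have "y1 = (A1 @ v1 # u1 # C) @ u2 # v2 # B2" using y1 2 by simp
    moreover have "y2 = A1 @ u1 # v1 # C @ v2 # u2 # B2" using y2 2 by simp
    ultimately show ?thesis using d1 d2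
      by (intro exI[of _ "A1 @ v1 # u1 # C @ v2 # u2 # B2"]) auto
  qed
qed

lemma up_lc:
  assumes "up n U D x y1" "up n U D x y2"
  shows "\<exists>d. (up n U D)\<^sup>*\<^sup>* y1 d \<and> (up n U D)\<^sup>*\<^sup>* y2 d"
proof -
  obtain A1 u1 v1 B1 where h1: "x = A1 @ u1 # v1 # B1" "y1 = A1 @ v1 # u1 # B1" "u1 < v1" "wit n U D (set A1) u1 v1"
    using assms(1) unfolding up_def by blast
  obtain A2 u2 v2 B2 where h2: "x = A2 @ u2 # v2 # B2" "y2 = A2 @ v2 # u2 # B2" "u2 < v2" "wit n U D (set A2) u2 v2"
    using assms(2) unfolding up_def by blast
  consider "length A1 < length A2" | "length A2 < length A1" | "length A1 = length A2" by linarith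
  then show ?thesis
  proof cases
    case 1
    then show ?thesis by (rule up_lc_aux[OF h1(1-4) h2(1-4)])
  next
    case 2
    have "\<exists>d. (up n U D)\<^sup>*\<^sup>* y2 d \<and> (up n U D)\<^sup>*\<^sup>* y1 d"
      using \<open>length A2 < length A1\<close> by (rule up_lc_aux[OF h2(1-4) h1(1-4)])
    then show ?thesis by blast
  next
    case 3
    have "A1 @ (u1 # v1 # B1) = A2 @ (u2 # v2 # B2)" using h1(1) h2(1) by simp
    then have "A1 = A2" "u1 # v1 # B1 = u2 # v2 # B2" using 3 by (simp_all add: append_eq_append_conv)
    then have "y1 = y2" using h1 h2 by auto
    then show ?thesis by blast
  qed
qed

lemma up_Sn:
  assumes "up n U D x y" shows "x \<in> Sn n \<longleftrightarrow> y \<in> Sn n"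
proof -
  obtain A u v B where "x = A @ u # v # B" "y = A @ v # u # B"
    using assms unfolding up_def by blast
  then have "set x = set y" "distinct x \<longleftrightarrow> distinct y" by auto
  then show ?thesis unfolding Sn_iff by simp
qed

lemma up_inv_card:
  assumes "up n U D x y" "x \<in> Sn n"
  shows "inversions x \<subset> inversions y"
proof -
  obtain A u v B where e: "x = A @ u # v # B" "y = A @ v # u # B" "u < v"
    using assms(1) unfolding up_def by blast
  have d: "distinct (A @ u # v # B)" using assms(2) e Sn_iff by auto
  have "inversions y = insert (u, v) (inversions x)" using inversions_swap[OF d e(3)] e by simp
  moreover have "(u, v) \<notin> inversions x"
  proof
    assume "(u, v) \<in> inversions x"
    then have "bef x v u" unfolding inversions_bef by auto
    moreover have "bef x u v" using e by (simp add: bef_append)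
    ultimately show False using bef_asym d e by blast
  qed
  ultimately show ?thesis by auto
qed

lemma inversions_sub: "x \<in> Sn n \<Longrightarrow> inversions x \<subseteq> {1..n} \<times> {1..n}"
  unfolding inversions_bef Sn_iff using bef_set by fastforce

lemma up_dec:
  assumes "x \<in> Sn n" "up n U D x y"
  shows "n * n - card (inversions y) < n * n - card (inversions x)"
proof -
  have ys: "y \<in> Sn n" using up_Sn assms by blast
  have "inversions x \<subset> inversions y" using up_inv_card assms by blast
  moreover have "finite (inversions y)" using inversions_sub[OF ys] finite_subset by blast
  ultimately have "card (inversions x) < card (inversions y)" by (simp add: psubset_card_mono)
  moreover have "card (inversions y) \<le> n * n"
    using card_mono[OF _ inversions_sub[OF ys]] by simp
  ultimately show ?thesis by linarith
qed

lemma mvs_up: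
  assumes "mvs n U D {} x y" "distinct x"
  shows "up n U D x y \<or> up n U D y x"
proof -
  obtain A u v B where e: "x = A @ u # v # B" "y = A @ v # u # B" "wit n U D ({} \<union> set A) u v"
    using assms(1) unfolding mvs_def by blast
  have "u \<noteq> v" using assms(2) e by auto
  then consider "u < v" | "v < u" by linarith
  then show ?thesis
  proof cases
    case 1
    then have "up n U D x y" unfolding up_def using e by auto
    then show ?thesis by simp
  next
    case 2
    then have "up n U D y x" unfolding up_def using e wit_sym[OF UD] by fastforce
    then show ?thesis by simp
  qed
qed

lemma common_up:
  assumes "x \<in> Sn n" "y \<in> Sn n" "eta n U D x = eta n U D y"
  shows "\<exists>t. (up n U D)\<^sup>*\<^sup>* x t \<and> (up n U D)\<^sup>*\<^sup>* y t"
proof -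
  have m: "(mvs n U D {})\<^sup>*\<^sup>* x y" using eta_iff_mvs[OF UD assms(1,2)] assms(3) by simp
  have "(\<lambda>a b. up n U D a b \<or> up n U D b a)\<^sup>*\<^sup>* x y"
    using m assms(1)
  proof (induction rule: rtranclp_induct)
    case base then show ?case by simp
  next
    case (step b c)
    have "b \<in> Sn n" using step.hyps(1) step.prems
    proof (induction rule: rtranclp_induct)
      case base then show ?case by simp
    next
      case (step b' c')
      then show ?case using mvs_set[OF UD, of "{}" b' c'] Sn_iff by auto
    qed
    then have "up n U D b c \<or> up n U D c b" using mvs_up[OF step.hyps(2)] Sn_iff by auto
    then have st: "(\<lambda>a b. up n U D a b \<or> up n U D b a) b c" by simp
    show ?case using rtranclp.rtrancl_into_rtrancl[OF step.IH[OF step.prems] st] .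
  qed
  have lc: "\<exists>d. (up n U D)\<^sup>*\<^sup>* b d \<and> (up n U D)\<^sup>*\<^sup>* c d"
    if "a \<in> Sn n" "up n U D a b" "up n U D a c" for a b c
    using up_lc that(2,3) by blast
  show ?thesis
  proof (rule church_rosser_measure[where r="up n U D" and S="Sn n" and f="\<lambda>x. n * n - card (inversions x)"])
    show "\<And>x y. up n U D x y \<Longrightarrow> (x \<in> Sn n) = (y \<in> Sn n)" by (rule up_Sn)
    show "\<And>x y. x \<in> Sn n \<Longrightarrow> up n U D x y \<Longrightarrow> n * n - card (inversions y) < n * n - card (inversions x)"
      by (rule up_dec)
    show "\<And>a b c. a \<in> Sn n \<Longrightarrow> up n U D a b \<Longrightarrow> up n U D a c \<Longrightarrow> \<exists>d. (up n U D)\<^sup>*\<^sup>* b d \<and> (up n U D)\<^sup>*\<^sup>* c d"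
      by (rule lc)
  qed (use assms(1) \<open>(\<lambda>a b. up n U D a b \<or> up n U D b a)\<^sup>*\<^sup>* x y\<close> in auto)
qed

end



lemma bef_pre: "distinct (X @ a # Y) \<Longrightarrow> bef (X @ a # Y) s a \<Longrightarrow> s \<in> set X"
  by (auto simp: bef_append dest: bef_set)

lemma bef_post: "distinct (X @ a # Y) \<Longrightarrow> bef (X @ a # Y) a s \<Longrightarrow> s \<in> set Y"
  by (auto simp: bef_append dest: bef_set)

lemma split_adj: "Suc i < length v \<Longrightarrow> v = take i v @ v ! i # v ! Suc i # drop (Suc (Suc i)) v"
  by (metis Cons_nth_drop_Suc Suc_lessD append_take_drop_id)

lemma adj_aux:
  assumes dv: "distinct v" and dw: "distinct w" and sw: "set v = set w"
    and sub: "inversions v \<subseteq> inversions w"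
  shows "i < j \<Longrightarrow> j < length v \<Longrightarrow> v ! i < v ! j \<Longrightarrow> bef w (v ! j) (v ! i) \<Longrightarrow>
    \<exists>A p q B. v = A @ p # q # B \<and> p < q \<and> (p, q) \<in> inversions w"
proof (induction "j - i" arbitrary: i j rule: less_induct)
  case less
  show ?case
  proof (cases "j = Suc i")
    case True
    have sl: "Suc i < length v" using True less.prems by simp
    have eqv: "v = take i v @ v ! i # v ! Suc i # drop (Suc (Suc i)) v" by (rule split_adj[OF sl])
    have h1: "(v ! i, v ! Suc i) \<in> inversions w" using less.prems True unfolding inversions_bef by auto
    have h2: "v ! i < v ! Suc i" using less.prems True by simp
    show ?thesis using eqv h1 h2 by blast
  next
    case False
    define k where "k = Suc i"
    have kj: "i < k" "k < j" using False less.prems unfolding k_def by auto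
    have klen: "k < length v" using kj less.prems by auto
    have ilen: "i < length v" using kj klen by auto
    have bvik: "bef v (v ! i) (v ! k)" using bef_nth[OF dv ilen klen] kj by simp
    have bvkj: "bef v (v ! k) (v ! j)" using bef_nth[OF dv klen less.prems(2)] kj by simp
    have neq: "v ! k \<noteq> v ! i" "v ! k \<noteq> v ! j"
      using nth_eq_iff_index_eq[OF dv klen ilen] nth_eq_iff_index_eq[OF dv klen less.prems(2)] kj by auto
    have inw: "v ! i \<in> set w" "v ! k \<in> set w" "v ! j \<in> set w"
      using nth_mem[OF ilen] nth_mem[OF klen] nth_mem[OF less.prems(2)] sw by simp_all
    have dkj: "j - k < j - i" using kj by auto
    consider "v ! i < v ! k" | "v ! k < v ! i" using neq by linarith
    then show ?thesis
    proof cases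
      case 1
      show ?thesis
      proof (cases "bef w (v ! k) (v ! i)")
        case True
        have dik: "k - i < j - i" using kj by auto
        show ?thesis using less.hyps[OF dik kj(1) klen 1 True] .
      next
        case False
        then have bwik: "bef w (v ! i) (v ! k)" using bef_total[OF dw inw(1) inw(2)] neq by auto
        have bwjk: "bef w (v ! j) (v ! k)" using bef_trans[OF dw less.prems(4) bwik] .
        show ?thesis
        proof (cases "v ! k < v ! j")
          case True
          then show ?thesis using less.hyps[OF dkj kj(2) less.prems(2) _ bwjk] by blast
        next
          case False
          then have "v ! j < v ! k" using neq by linarith
          then have "(v ! j, v ! k) \<in> inversions v" using bvkj unfolding inversions_bef by auto
          then have "bef w (v ! k) (v ! j)" using sub unfolding inversions_bef by auto
          then show ?thesis using bwjk bef_asym[OF dw] by blast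
        qed
      qed
    next
      case 2
      then have "(v ! k, v ! i) \<in> inversions v" using bvik unfolding inversions_bef by auto
      then have bwik: "bef w (v ! i) (v ! k)" using sub unfolding inversions_bef by auto
      have bwjk: "bef w (v ! j) (v ! k)" using bef_trans[OF dw less.prems(4) bwik] .
      have "v ! k < v ! j" using 2 less.prems(3) by linarith
      then show ?thesis using less.hyps[OF dkj kj(2) less.prems(2) _ bwjk] by blast
    qed
  qed
qed

lemma adj_ascent:
  assumes dv: "distinct v" and dw: "distinct w" and sw: "set v = set w"
    and sub: "inversions v \<subseteq> inversions w" and ne: "inversions v \<noteq> inversions w"
  shows "\<exists>A p q B. v = A @ p # q # B \<and> p < q \<and> (p, q) \<in> inversions w"
proof -
  obtain p q where pq: "(p, q) \<in> inversions w" "(p, q) \<notin> inversions v" using sub ne by auto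
  then have pq2: "p < q" "bef w q p" "\<not> bef v q p" unfolding inversions_bef by auto
  have "p \<in> set v" "q \<in> set v" using bef_set[OF pq2(2)] sw by auto
  then have "bef v p q" using bef_total[OF dv] pq2 by fastforce
  then obtain i j where ij: "i < j" "j < length v" "v ! i = p" "v ! j = q" unfolding bef_idx by blast
  show ?thesis using adj_aux[OF dv dw sw sub ij(1,2)] ij pq2 by auto
qed



lemma join_unique:
  assumes "is_weak_join n x z j1" "is_weak_join n x z j2"
  shows "j1 = j2"
proof -
  have "j1 \<in> Sn n" "j2 \<in> Sn n" using assms unfolding is_weak_join_def by auto
  moreover have "weak_le j1 j2" "weak_le j2 j1" using assms unfolding is_weak_join_def by auto
  ultimately show ?thesis using eq_of_inversions unfolding weak_le_def Sn_iff by blast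
qed

context
  fixes n :: nat and U D :: "nat set"
  assumes UD: "U \<union> D = {1..n}" "U \<inter> D = {}"
begin

lemma core_path:
  assumes wS: "w \<in> Sn n" and w'S: "w' \<in> Sn n"
    and new: "\<And>p q. (p, q) \<in> inversions w' \<Longrightarrow> (p, q) \<notin> inversions w \<Longrightarrow>
       p < s \<and> s < q \<and> (s \<in> U \<longrightarrow> bef w s p) \<and> (s \<in> D \<longrightarrow> bef w q s)"
    and sn: "s \<in> {1..n}"
  shows "v \<in> Sn n \<Longrightarrow> inversions w \<subseteq> inversions v \<Longrightarrow> inversions v \<subseteq> inversions w' \<Longrightarrow> (up n U D)\<^sup>*\<^sup>* v w'"
proof (induction "card (inversions w' - inversions v)" arbitrary: v rule: less_induct)
  case less
  have dv: "distinct v" and dw': "distinct w'" and sv: "set v = set w'"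
    using less.prems(1) w'S unfolding Sn_iff by auto
  show ?case
  proof (cases "inversions v = inversions w'")
    case True
    then have "v = w'" using eq_of_inversions[OF dv dw' sv] by simp
    then show ?thesis by simp
  next
    case False
    obtain A p q B where v: "v = A @ p # q # B" and pq: "p < q" "(p, q) \<in> inversions w'"
      using adj_ascent[OF dv dw' sv less.prems(3) False] by blast
    have dv2: "distinct (A @ p # q # B)" using dv v by simp
    have bvpq: "bef v p q" using v by (simp add: bef_append)
    have pqv: "(p, q) \<notin> inversions v"
    proof
      assume "(p, q) \<in> inversions v"
      then have "bef v q p" unfolding inversions_bef by simp
      then show False using bvpq bef_asym[OF dv] by blast
    qed
    then have pqw: "(p, q) \<notin> inversions w" using less.prems(2) by blast
    note nw = new[OF pq(2) pqw]
    have sA: "s \<in> Sset n U D (set A)"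
    proof (cases "s \<in> U")
      case True
      then have "bef w s p" using nw by simp
      then have "(p, s) \<in> inversions w" using nw unfolding inversions_bef by simp
      then have "(p, s) \<in> inversions v" using less.prems(2) by blast
      then have "bef (A @ p # q # B) s p" using v unfolding inversions_bef by simp
      then have "s \<in> set A" using bef_pre[OF dv2] by blast
      then show ?thesis using Sset_mem[OF UD sn] True by simp
    next
      case False
      then have sD: "s \<in> D" using UD sn by auto
      then have "bef w q s" using nw by simp
      then have "(s, q) \<in> inversions w" using nw unfolding inversions_bef by simp
      then have "(s, q) \<in> inversions v" using less.prems(2) by blast
      then have "bef (A @ p # q # B) q s" using v unfolding inversions_bef by simp
      then have "bef ((A @ [p]) @ q # B) q s" by simp
      moreover have "distinct ((A @ [p]) @ q # B)" using dv2 by simp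
      ultimately have "s \<in> set B" using bef_post by blast
      then have "s \<notin> set A" using dv2 by auto
      then show ?thesis using Sset_mem[OF UD sn] False by simp
    qed
    define v1 where "v1 = A @ q # p # B"
    have upv: "up n U D v v1" unfolding v1_def v using up_intro[OF UD, of p s q A B] nw sA by simp
    have v1S: "v1 \<in> Sn n" using up_Sn[OF UD upv] less.prems(1) by simp
    have inv1: "inversions v1 = insert (p, q) (inversions v)"
      unfolding v1_def v using inversions_swap[OF dv2 pq(1)] by simp
    have sub1: "inversions w \<subseteq> inversions v1" using inv1 less.prems(2) by auto
    have sub2: "inversions v1 \<subseteq> inversions w'" using inv1 less.prems(3) pq(2) by auto
    have fin: "finite (inversions w')" using inversions_sub[OF UD w'S] finite_subset by blast
    have "inversions w' - inversions v1 \<subset> inversions w' - inversions v" using inv1 pq(2) pqv by auto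
    then have "card (inversions w' - inversions v1) < card (inversions w' - inversions v)"
      using fin by (meson finite_Diff psubset_card_mono)
    then have "(up n U D)\<^sup>*\<^sup>* v1 w'" using less.hyps v1S sub1 sub2 by blast
    then show ?thesis using upv by (meson converse_rtranclp_into_rtranclp)
  qed
qed

end



lemma block_bef:
  assumes d: "distinct (\<alpha> @ K @ \<gamma>)" and sK: "set K' = set K"
  shows "bef (\<alpha> @ K' @ \<gamma>) p q \<longleftrightarrow> (if p \<in> set K \<and> q \<in> set K then bef K' p q else bef (\<alpha> @ K @ \<gamma>) p q)"
proof -
  have "bef (\<alpha> @ K' @ \<gamma>) p q \<longleftrightarrow> bef \<alpha> p q \<or> bef K' p q \<or> bef \<gamma> p q \<or> (p \<in> set \<alpha> \<and> (q \<in> set K' \<or> q \<in> set \<gamma>)) \<or> (p \<in> set K' \<and> q \<in> set \<gamma>)"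
    by (auto simp: bef_append)
  moreover have "bef (\<alpha> @ K @ \<gamma>) p q \<longleftrightarrow> bef \<alpha> p q \<or> bef K p q \<or> bef \<gamma> p q \<or> (p \<in> set \<alpha> \<and> (q \<in> set K \<or> q \<in> set \<gamma>)) \<or> (p \<in> set K \<and> q \<in> set \<gamma>)"
    by (auto simp: bef_append)
  moreover have "bef K' p q \<Longrightarrow> p \<in> set K \<and> q \<in> set K" using bef_set sK by blast
  moreover have "bef K p q \<Longrightarrow> p \<in> set K \<and> q \<in> set K" using bef_set by blast
  moreover have "bef \<alpha> p q \<Longrightarrow> p \<in> set \<alpha> \<and> q \<in> set \<alpha>" using bef_set by blast
  moreover have "bef \<gamma> p q \<Longrightarrow> p \<in> set \<gamma> \<and> q \<in> set \<gamma>" using bef_set by blast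
  moreover have "set \<alpha> \<inter> set K = {}" "set \<alpha> \<inter> set \<gamma> = {}" "set K \<inter> set \<gamma> = {}" using d by auto
  ultimately show ?thesis using sK by (auto split: if_splits)
qed

context
  fixes n :: nat and U D :: "nat set"
  assumes UD: "U \<union> D = {1..n}" "U \<inter> D = {}"
begin

lemma core:
  assumes xS: "x \<in> Sn n" and upx: "up n U D x x'" and J: "is_weak_join n x z w"
  shows "\<exists>w'. is_weak_join n x' z w' \<and> (up n U D)\<^sup>*\<^sup>* w w'"
proof -
  obtain A a c B where x: "x = A @ a # c # B" and x': "x' = A @ c # a # B" and ac: "a < c"
    and wt: "wit n U D (set A) a c" using upx unfolding up_def by blast
  have dx: "distinct (A @ a # c # B)" and sx: "set x = {1..n}" using xS x unfolding Sn_iff by auto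
  have wS: "w \<in> Sn n" and xw: "inversions x \<subseteq> inversions w" and zw: "inversions z \<subseteq> inversions w"
    and least: "\<And>u. u \<in> Sn n \<Longrightarrow> inversions x \<subseteq> inversions u \<Longrightarrow> inversions z \<subseteq> inversions u \<Longrightarrow> inversions w \<subseteq> inversions u"
    using J unfolding is_weak_join_def weak_le_def by auto
  have dw: "distinct w" and sw: "set w = {1..n}" using wS unfolding Sn_iff by auto
  have Nx': "inversions x' = insert (a, c) (inversions x)"
    unfolding x x' using inversions_swap[OF dx ac] .
  have x'S: "x' \<in> Sn n" using up_Sn[OF UD upx] xS by simp
  have acn: "a \<in> {1..n}" "c \<in> {1..n}" using sx x by auto
  show ?thesis
  proof (cases "bef w c a")
    case True
    have "is_weak_join n x' z w"
      unfolding is_weak_join_def weak_le_def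
    proof (intro conjI ballI impI)
      show "w \<in> Sn n" by (rule wS)
      show "inversions x' \<subseteq> inversions w" using Nx' xw True ac unfolding inversions_bef by auto
      show "inversions z \<subseteq> inversions w" by (rule zw)
      fix u assume "u \<in> Sn n" "inversions x' \<subseteq> inversions u \<and> inversions z \<subseteq> inversions u"
      then show "inversions w \<subseteq> inversions u" using least Nx' by auto
    qed
    then show ?thesis by blast
  next
    case False
    have "a \<in> set w" "c \<in> set w" using acn sw by auto
    then have "bef w a c" using bef_total[OF dw] False ac by fastforce
    then obtain \<alpha> \<beta> \<gamma> where w: "w = \<alpha> @ a # \<beta> @ c # \<gamma>" using bef_split by blast
    define K where "K = a # \<beta> @ [c]"
    define H where "H = filter (\<lambda>v. c < v) \<beta>"
    define L where "L = filter (\<lambda>v. v < a) \<beta>"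
    define K' where "K' = H @ c # a # L"
    define w' where "w' = \<alpha> @ K' @ \<gamma>"
    have wK: "w = \<alpha> @ K @ \<gamma>" unfolding K_def w by simp
    have dK: "distinct (\<alpha> @ K @ \<gamma>)" using dw wK by simp
    have d\<beta>: "distinct \<beta>" "a \<notin> set \<beta>" "c \<notin> set \<beta>" using dK unfolding K_def by auto
    have beta_out: "v < a \<or> c < v" if vb: "v \<in> set \<beta>" for v
    proof (rule ccontr)
      assume "\<not> (v < a \<or> c < v)"
      moreover have "v \<noteq> a" "v \<noteq> c" using vb d\<beta> by auto
      ultimately have av: "a < v" "v < c" by auto
      have bwav: "bef w a v" "bef w v c" using w vb by (auto simp: bef_append)
      have "v \<in> set x" using vb sw sx w by auto
      then have "v \<in> set A \<or> v \<in> set B" using x av by auto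
      then show False
      proof
        assume "v \<in> set A"
        then have "bef x v a" using x by (simp add: bef_append)
        then have "(a, v) \<in> inversions x" using av unfolding inversions_bef by simp
        then have "bef w v a" using xw unfolding inversions_bef by auto
        then show False using bwav bef_asym[OF dw] by blast
      next
        assume "v \<in> set B"
        then have "bef x c v" using x by (simp add: bef_append)
        then have "(v, c) \<in> inversions x" using av unfolding inversions_bef by simp
        then have "bef w c v" using xw unfolding inversions_bef by auto
        then show False using bwav bef_asym[OF dw] by blast
      qed
    qed
    have setH: "set H = {v \<in> set \<beta>. c < v}" and setL: "set L = {v \<in> set \<beta>. v < a}"
      unfolding H_def L_def by auto
    have sK: "set K' = set K" unfolding K'_def K_def using setH setL beta_out ac by auto
    have dK': "distinct K'" unfolding K'_def H_def L_def using d\<beta> ac by auto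
    have bw': "bef w' p q \<longleftrightarrow> (if p \<in> set K \<and> q \<in> set K then bef K' p q else bef w p q)" for p q
      unfolding w'_def wK using block_bef[OF dK sK] .
    have w'S: "w' \<in> Sn n"
    proof -
      have "set w' = set w" unfolding w'_def wK using sK by simp
      moreover have "distinct w'" unfolding w'_def using dK sK dK' by auto
      ultimately show ?thesis using wS unfolding Sn_iff by simp
    qed
    have bK: "bef K p q \<longleftrightarrow> (p = a \<and> (q \<in> set \<beta> \<or> q = c)) \<or> bef \<beta> p q \<or> (p \<in> set \<beta> \<and> q = c)" for p q
      unfolding K_def by (auto simp: bef_append)
    have bK': "bef K' p q \<longleftrightarrow> bef H p q \<or> (p \<in> set H \<and> (q = c \<or> q = a \<or> q \<in> set L)) \<or> (p = c \<and> (q = a \<or> q \<in> set L))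
        \<or> (p = a \<and> q \<in> set L) \<or> bef L p q" for p q
      unfolding K'_def by (auto simp: bef_append)
    have bH: "bef H p q \<longleftrightarrow> c < p \<and> c < q \<and> bef \<beta> p q" for p q unfolding H_def by (simp add: bef_filter)
    have bL: "bef L p q \<longleftrightarrow> p < a \<and> q < a \<and> bef \<beta> p q" for p q unfolding L_def by (simp add: bef_filter)
    have bbo: "(p < a \<or> c < p) \<and> (q < a \<or> c < q) \<and> p \<in> set \<beta> \<and> q \<in> set \<beta>" if "bef \<beta> p q" for p q
      using bef_set[OF that] beta_out by blast
    have bwK: "bef w p q \<longleftrightarrow> bef K p q" if "p \<in> set K" "q \<in> set K" for p q
      using block_bef[OF dK refl, of p q] that wK by simp
    have F1: "inversions w \<subseteq> inversions w'"
    proof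
      fix pq assume "pq \<in> inversions w"
      then obtain p q where pq: "pq = (p, q)" "p < q" "bef w q p" unfolding inversions_bef by auto
      have "bef w' q p"
      proof (cases "p \<in> set K \<and> q \<in> set K")
        case False
        then show ?thesis using bw' pq by auto
      next
        case True
        have bKqp: "bef K q p" using pq(3) bwK True by blast
        have "bef K' q p"
          using bKqp pq(2) ac unfolding bK bK' bH bL setH setL
          by (auto dest: bbo)
        then show ?thesis using bw' True by simp
      qed
      then show "pq \<in> inversions w'" using pq unfolding inversions_bef by simp
    qed
    have F2: "(a, c) \<in> inversions w'"
    proof -
      have "bef K' c a" unfolding bK' by simp
      moreover have "a \<in> set K" "c \<in> set K" unfolding K_def by auto
      ultimately show ?thesis using bw' ac unfolding inversions_bef by simp
    qed
    have F3: "(p = a \<or> p \<in> set L) \<and> (q = c \<or> q \<in> set H)"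
      if "(p, q) \<in> inversions w'" "(p, q) \<notin> inversions w" for p q
    proof -
      have pq: "p < q" "bef w' q p" "\<not> bef w q p" using that unfolding inversions_bef by auto
      have inK: "p \<in> set K \<and> q \<in> set K"
      proof (rule ccontr)
        assume "\<not> (p \<in> set K \<and> q \<in> set K)"
        then show False using pq bw'[of q p] by auto
      qed
      have "bef K' q p" using pq(2) bw' inK by simp
      moreover have "\<not> bef K q p" using pq(3) bwK inK by blast
      ultimately show ?thesis
        using pq(1) ac unfolding bK bK' bH bL setH setL
        by (auto dest: bbo)
    qed
    have mm: "min a c = a" "max a c = c" using ac by auto
    obtain s where s: "a < s" "s < c" "s \<in> Sset n U D (set A)" using wt unfolding wit_def mm by blast
    have sn: "s \<in> {1..n}" using s(1,2) acn by simp
    have sA: "s \<in> set A \<longleftrightarrow> s \<in> U" using Sset_mem[OF UD sn] s(3) by simp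
    have sU: "s \<in> set \<alpha>" if "s \<in> U"
    proof -
      have "s \<in> set A" using sA that by simp
      then have "bef x s a" unfolding x by (simp add: bef_append)
      then have "(a, s) \<in> inversions x" using s(1) unfolding inversions_bef by simp
      then have "(a, s) \<in> inversions w" using xw by blast
      then have "bef (\<alpha> @ a # (\<beta> @ c # \<gamma>)) s a" unfolding inversions_bef w by simp
      moreover have "distinct (\<alpha> @ a # (\<beta> @ c # \<gamma>))" using dw unfolding w by simp
      ultimately show ?thesis using bef_pre by blast
    qed
    have sD: "s \<in> set \<gamma>" if "s \<in> D"
    proof -
      have "s \<notin> U" using that UD by auto
      then have "s \<notin> set A" using sA by simp
      moreover have "s \<in> set (A @ a # c # B)" using sn sx unfolding x by simp
      moreover have "s \<noteq> a" "s \<noteq> c" using s(1,2) by auto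
      ultimately have "s \<in> set B" by simp
      then have "bef x c s" unfolding x by (simp add: bef_append)
      then have "(s, c) \<in> inversions x" using s(2) unfolding inversions_bef by simp
      then have "(s, c) \<in> inversions w" using xw by blast
      then have "bef ((\<alpha> @ a # \<beta>) @ c # \<gamma>) c s" unfolding inversions_bef w by simp
      moreover have "distinct ((\<alpha> @ a # \<beta>) @ c # \<gamma>)" using dw unfolding w by simp
      ultimately show ?thesis using bef_post by blast
    qed
    have new: "p < s \<and> s < q \<and> (s \<in> U \<longrightarrow> bef w s p) \<and> (s \<in> D \<longrightarrow> bef w q s)"
      if "(p, q) \<in> inversions w'" "(p, q) \<notin> inversions w" for p q
    proof -
      have f3: "(p = a \<or> p \<in> set L) \<and> (q = c \<or> q \<in> set H)" using F3[OF that] .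
      have Ls: "set L \<subseteq> set \<beta>" "\<And>v. v \<in> set L \<Longrightarrow> v < a" unfolding L_def by auto
      have Hs: "set H \<subseteq> set \<beta>" "\<And>v. v \<in> set H \<Longrightarrow> c < v" unfolding H_def by auto
      have pK: "p \<in> set K" using f3 Ls(1) unfolding K_def by auto
      have qK: "q \<in> set K" using f3 Hs(1) unfolding K_def by auto
      have "p \<le> a" using f3 Ls(2) by force
      moreover have "c \<le> q" using f3 Hs(2) by force
      ultimately have ps: "p < s" "s < q" using s(1,2) by auto
      have "bef w s p" if "s \<in> U" using sU[OF that] pK wK by (simp add: bef_append)
      moreover have "bef w q s" if "s \<in> D" using sD[OF that] qK wK by (simp add: bef_append)
      ultimately show ?thesis using ps by blast
    qed
    have path: "(up n U D)\<^sup>*\<^sup>* w w'"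
      using core_path[OF UD wS w'S new sn wS order_refl F1] .
    have "is_weak_join n x' z w'"
      unfolding is_weak_join_def weak_le_def
    proof (intro conjI ballI impI)
      show "w' \<in> Sn n" by (rule w'S)
      show "inversions x' \<subseteq> inversions w'" using Nx' xw F1 F2 by auto
      show "inversions z \<subseteq> inversions w'" using zw F1 by auto
      fix u assume uS: "u \<in> Sn n" and hu: "inversions x' \<subseteq> inversions u \<and> inversions z \<subseteq> inversions u"
      have du: "distinct u" using uS unfolding Sn_iff by simp
      have wu: "inversions w \<subseteq> inversions u" using least[OF uS] hu Nx' by auto
      have uca: "bef u c a" using hu Nx' unfolding inversions_bef by auto
      show "inversions w' \<subseteq> inversions u"
      proof
        fix pq assume pqw': "pq \<in> inversions w'"
        obtain p q where pq: "pq = (p, q)" by (cases pq)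
        show "pq \<in> inversions u"
        proof (cases "(p, q) \<in> inversions w")
          case True
          then show ?thesis using wu pq by auto
        next
          case False
          have pqw'2: "(p, q) \<in> inversions w'" using pqw' pq by simp
          have f3: "(p = a \<or> p \<in> set L) \<and> (q = c \<or> q \<in> set H)" using F3[OF pqw'2 False] .
          have plq: "p < q" using pqw'2 unfolding inversions_bef by simp
          have qc: "q = c \<or> bef u q c"
          proof (cases "q = c")
            case False
            then have qH: "q \<in> set \<beta>" "c < q" using f3 setH by auto
            then have "bef w q c" using w by (simp add: bef_append)
            then have "(c, q) \<in> inversions w" using qH unfolding inversions_bef by simp
            then show ?thesis using wu unfolding inversions_bef by auto
          qed simp
          have pa: "p = a \<or> bef u a p"
          proof (cases "p = a")
            case False
            then have pL: "p \<in> set \<beta>" "p < a" using f3 setL by auto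
            then have "bef w a p" using w by (simp add: bef_append)
            then have "(p, a) \<in> inversions w" using pL unfolding inversions_bef by simp
            then show ?thesis using wu unfolding inversions_bef by auto
          qed simp
          have "bef u c p" using uca pa bef_trans[OF du uca] by auto
          then have "bef u q p" using qc bef_trans[OF du] by auto
          then show ?thesis using pq plq unfolding inversions_bef by simp
        qed
      qed
    qed
    then show ?thesis using path by blast
  qed
qed

end



context
  fixes n :: nat and U D :: "nat set"
  assumes UD: "U \<union> D = {1..n}" "U \<inter> D = {}"
begin

lemma up_star_Sn: "(up n U D)\<^sup>*\<^sup>* x t \<Longrightarrow> x \<in> Sn n \<Longrightarrow> t \<in> Sn n"
  by (induction rule: rtranclp_induct) (use up_Sn[OF UD] in blast)+

lemma join_along:
  assumes "(up n U D)\<^sup>*\<^sup>* x t" "x \<in> Sn n" "is_weak_join n x z j"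
  shows "\<exists>jt. is_weak_join n t z jt \<and> (up n U D)\<^sup>*\<^sup>* j jt"
  using assms(1)
proof (induction rule: rtranclp_induct)
  case base
  then show ?case using assms(3) by blast
next
  case (step y t)
  obtain jy where jy: "is_weak_join n y z jy" "(up n U D)\<^sup>*\<^sup>* j jy" using step.IH by blast
  have yS: "y \<in> Sn n" using up_star_Sn[OF step.hyps(1) assms(2)] .
  obtain jt where jt: "is_weak_join n t z jt" "(up n U D)\<^sup>*\<^sup>* jy jt"
    using core[OF UD yS step.hyps(2) jy(1)] by blast
  then show ?case using jy(2) by (meson rtranclp_trans)
qed

lemma up_star_mvs: "(up n U D)\<^sup>*\<^sup>* a b \<Longrightarrow> (mvs n U D {})\<^sup>*\<^sup>* a b"
proof (induction rule: rtranclp_induct)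
  case base then show ?case by simp
next
  case (step y z)
  then have "mvs n U D {} y z" unfolding up_def mvs_def by auto
  then show ?case using step.IH by simp
qed

lemma join_compat:
  assumes xS: "x \<in> Sn n" and yS: "y \<in> Sn n" and eq: "eta n U D x = eta n U D y"
    and jx: "is_weak_join n x z j" and jy: "is_weak_join n y z j'"
  shows "eta n U D j = eta n U D j'"
proof -
  obtain t where t: "(up n U D)\<^sup>*\<^sup>* x t" "(up n U D)\<^sup>*\<^sup>* y t" using common_up[OF UD xS yS eq] by blast
  obtain jt1 where jt1: "is_weak_join n t z jt1" "(up n U D)\<^sup>*\<^sup>* j jt1" using join_along[OF t(1) xS jx] by blast
  obtain jt2 where jt2: "is_weak_join n t z jt2" "(up n U D)\<^sup>*\<^sup>* j' jt2" using join_along[OF t(2) yS jy] by blast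
  have "jt1 = jt2" using join_unique[OF jt1(1) jt2(1)] .
  have jS: "j \<in> Sn n" "j' \<in> Sn n" using jx jy unfolding is_weak_join_def by auto
  have jtS: "jt1 \<in> Sn n" "jt2 \<in> Sn n" using jt1 jt2 unfolding is_weak_join_def by auto
  have "eta n U D j = eta n U D jt1" using eta_iff_mvs[OF UD jS(1) jtS(1)] up_star_mvs[OF jt1(2)] by simp
  moreover have "eta n U D j' = eta n U D jt2" using eta_iff_mvs[OF UD jS(2) jtS(2)] up_star_mvs[OF jt2(2)] by simp
  ultimately show ?thesis using \<open>jt1 = jt2\<close> by simp
qed

end

lemma rev_Sn: "x \<in> Sn n \<Longrightarrow> rev x \<in> Sn n"
  unfolding Sn_iff by simp

lemma inversions_rev:
  assumes "x \<in> Sn n"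
  shows "inversions (rev x) = {(p, q). p < q \<and> p \<in> {1..n} \<and> q \<in> {1..n}} - inversions x"
proof -
  have dx: "distinct x" and sx: "set x = {1..n}" using assms unfolding Sn_iff by auto
  have "bef x p q \<longleftrightarrow> p \<in> {1..n} \<and> q \<in> {1..n} \<and> \<not> bef x q p" if "p < q" for p q
  proof
    assume "bef x p q"
    then show "p \<in> {1..n} \<and> q \<in> {1..n} \<and> \<not> bef x q p"
      using bef_set[of x p q] bef_asym[OF dx] sx by blast
  next
    assume h: "p \<in> {1..n} \<and> q \<in> {1..n} \<and> \<not> bef x q p"
    then show "bef x p q" using bef_total[OF dx, of p q] sx that by auto
  qed
  then show ?thesis unfolding inversions_bef bef_rev by auto
qed

lemma inversions_sub0: "x \<in> Sn n \<Longrightarrow> inversions x \<subseteq> {(p, q). p < q \<and> p \<in> {1..n} \<and> q \<in> {1..n}}"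
  unfolding inversions_bef Sn_iff using bef_set by fastforce

lemma weak_le_rev:
  assumes "a \<in> Sn n" "b \<in> Sn n"
  shows "weak_le (rev a) (rev b) \<longleftrightarrow> weak_le b a"
  unfolding weak_le_def inversions_rev[OF assms(1)] inversions_rev[OF assms(2)]
  using inversions_sub0[OF assms(1)] inversions_sub0[OF assms(2)] by blast

lemma meet_rev:
  assumes xS: "x \<in> Sn n" and zS: "z \<in> Sn n" and m: "is_weak_meet n x z m"
  shows "is_weak_join n (rev x) (rev z) (rev m)"
proof -
  have mS: "m \<in> Sn n" and mx: "weak_le m x" and mz: "weak_le m z"
    and least: "\<And>w. w \<in> Sn n \<Longrightarrow> weak_le w x \<Longrightarrow> weak_le w z \<Longrightarrow> weak_le w m"
    using m unfolding is_weak_meet_def by auto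
  show ?thesis
    unfolding is_weak_join_def
  proof (intro conjI ballI impI)
    show "rev m \<in> Sn n" using rev_Sn[OF mS] .
    show "weak_le (rev x) (rev m)" using weak_le_rev[OF xS mS] mx by simp
    show "weak_le (rev z) (rev m)" using weak_le_rev[OF zS mS] mz by simp
    fix w assume wS: "w \<in> Sn n" and h: "weak_le (rev x) w \<and> weak_le (rev z) w"
    have rwS: "rev w \<in> Sn n" using rev_Sn[OF wS] .
    have "weak_le (rev w) x" using weak_le_rev[OF xS rwS] h by simp
    moreover have "weak_le (rev w) z" using weak_le_rev[OF zS rwS] h by simp
    ultimately have "weak_le (rev w) m" using least[OF rwS] by simp
    then show "weak_le (rev m) w" using weak_le_rev[OF mS rwS] by simp
  qed
qed

lemma Sset_swap:
  assumes UD: "U \<union> D = {1..n}" "U \<inter> D = {}" and R: "R \<subseteq> {1..n}"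
  shows "Sset n U D R = Sset n D U ({1..n} - R)"
  unfolding Sset_def using UD R by auto

lemma eta_rev:
  assumes UD: "U \<union> D = {1..n}" "U \<inter> D = {}" and xS: "x \<in> Sn n"
  shows "eta n U D x = eta n D U (rev x)"
proof -
  have DU: "D \<union> U = {1..n}" "D \<inter> U = {}" using UD by auto
  have dx: "distinct x" and sx: "set x = {1..n}" and lx: "length x = n"
    using xS Sn_iff Sn_length by auto
  have Qd: "Q_diagonals n U D = Q_diagonals n D U"
    unfolding Q_diagonals_def Q_edges_def by auto
  have key: "edge_at n D U (set (take t (rev x))) e = edge_at n U D (set (take (n - t) x)) e"
    if "t \<le> n" for t e
  proof -
    have "take t (rev x) = rev (drop (n - t) x)" using lx by (simp add: take_rev)
    then have "set (take t (rev x)) = set (drop (n - t) x)" by simp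
    also have "\<dots> = {1..n} - set (take (n - t) x)"
    proof -
      have "set (take (n - t) x) \<inter> set (drop (n - t) x) = {}"
        using dx by (metis append_take_drop_id distinct_append)
      moreover have "set (take (n - t) x) \<union> set (drop (n - t) x) = {1..n}"
        using sx by (metis set_append append_take_drop_id)
      ultimately show ?thesis by blast
    qed
    finally have e1: "set (take t (rev x)) = {1..n} - set (take (n - t) x)" .
    have sub: "set (take (n - t) x) \<subseteq> {1..n}" using sx set_take_subset by metis
    show ?thesis unfolding e1 edge_at_def using Sset_swap[OF UD sub] by simp
  qed
  have "eta n U D x = GG n U D {} x" using eta_GG[OF UD xS] .
  also have "\<dots> = GG n D U {} (rev x)"
  proof -
    have "(\<exists>t\<le>n. edge_at n U D (set (take t x)) e) \<longleftrightarrow> (\<exists>t\<le>n. edge_at n D U (set (take t (rev x))) e)" for e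
    proof
      assume "\<exists>t\<le>n. edge_at n U D (set (take t x)) e"
      then obtain t where "t \<le> n" "edge_at n U D (set (take t x)) e" by blast
      moreover have "n - (n - t) = t" using \<open>t \<le> n\<close> by simp
      ultimately show "\<exists>t\<le>n. edge_at n D U (set (take t (rev x))) e"
        using key[of "n - t" e] by (intro exI[of _ "n - t"]) auto
    next
      assume "\<exists>t\<le>n. edge_at n D U (set (take t (rev x))) e"
      then obtain t where "t \<le> n" "edge_at n D U (set (take t (rev x))) e" by blast
      then show "\<exists>t\<le>n. edge_at n U D (set (take t x)) e"
        using key[of t e] by (intro exI[of _ "n - t"]) auto
    qed
    then show ?thesis unfolding GG_def Qd using lx by simp
  qed
  also have "\<dots> = eta n D U (rev x)" using eta_GG[OF DU rev_Sn[OF xS]] by simp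
  finally show ?thesis .
qed

theorem theorem5p1:
  fixes n :: nat and U D :: "nat set"
  assumes "U \<union> D = {1..n}" and "U \<inter> D = {}"
  shows "weak_lattice_congruence n
           {(x, y). x \<in> Sn n \<and> y \<in> Sn n \<and> eta n U D x = eta n U D y}"
proof -
  have UD: "U \<union> D = {1..n}" "U \<inter> D = {}" using assms by auto
  have DU: "D \<union> U = {1..n}" "D \<inter> U = {}" using assms by auto
  let ?R = "{(x, y). x \<in> Sn n \<and> y \<in> Sn n \<and> eta n U D x = eta n U D y}"
  have eqv: "equiv (Sn n) ?R"
    by (rule equivI) (auto simp: refl_on_def sym_def trans_def)
  have meets: "(m, m') \<in> ?R"
    if "(x, y) \<in> ?R" "z \<in> Sn n" "is_weak_meet n x z m" "is_weak_meet n y z m'" for x y z m m'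
  proof -
    have xS: "x \<in> Sn n" and yS: "y \<in> Sn n" and exy: "eta n U D x = eta n U D y" using that(1) by auto
    have mS: "m \<in> Sn n" "m' \<in> Sn n" using that(3,4) unfolding is_weak_meet_def by auto
    have j1: "is_weak_join n (rev x) (rev z) (rev m)" using meet_rev[OF xS that(2,3)] .
    have j2: "is_weak_join n (rev y) (rev z) (rev m')" using meet_rev[OF yS that(2,4)] .
    have "eta n D U (rev x) = eta n D U (rev y)"
      using exy eta_rev[OF UD xS] eta_rev[OF UD yS] by simp
    then have "eta n D U (rev m) = eta n D U (rev m')"
      using join_compat[OF DU rev_Sn[OF xS] rev_Sn[OF yS] _ j1 j2] by simp
    then have "eta n U D m = eta n U D m'" using eta_rev[OF UD mS(1)] eta_rev[OF UD mS(2)] by simp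
    then show ?thesis using mS by simp
  qed
  have joins: "(j, j') \<in> ?R"
    if "(x, y) \<in> ?R" "z \<in> Sn n" "is_weak_join n x z j" "is_weak_join n y z j'" for x y z j j'
  proof -
    have xS: "x \<in> Sn n" and yS: "y \<in> Sn n" and exy: "eta n U D x = eta n U D y" using that(1) by auto
    have jS: "j \<in> Sn n" "j' \<in> Sn n" using that(3,4) unfolding is_weak_join_def by auto
    have "eta n U D j = eta n U D j'" using join_compat[OF UD xS yS exy that(3,4)] .
    then show ?thesis using jS by simp
  qed
  show ?thesis unfolding weak_lattice_congruence_def
    using eqv meets joins by blast
qed


end
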